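(* For every $\epsilon>0$ and $R>0$ there exists an integer $N=N(\epsilon,R)$ such that for every $\theta\in[0,1)$ and every integer $n\geq N$, the set $\varphi_\theta(\mathbb N)$ is $\epsilon$-close in the open disc of radius $R$ centered at $\varphi_\theta(n)$ to some affine lattice which is equivalent, up to an orientation-preserving affine similarity of $\mathbb C$, to the lattice $\mathbb Z+\mathbb Z\,\frac{4i\pi n}{1+4i\pi\{\theta\} n}$.
   Context: For $\theta\in\mathbb R$, the phyllotactic map $\varphi_\theta:\mathbb N\to\mathbb C$ is $\varphi_\theta(n)=\sqrt{n}\,e^{2i\pi\theta n}$, and $\varphi_\theta(\mathbb N)$ is its image. $\{\theta\}=\theta-\lfloor\theta\rfloor\in[0,1)$ is the fractional part. An affine lattice is a set $\alpha+\Gamma$ with $\alpha\in\mathbb C$ and $\Gamma=\mathbb Z\omega_1+\mathbb Z\omega_2$ for $\mathbb R$-linearly independent $\omega_1,\omega_2\in\mathbb C$; two affine lattices are equivalent if one is the image of the other under a map $z\mapsto \lambda z+\beta$ with $\lambda\in\mathbb C^*$, $\beta\in\mathbb C$. For a metric space $E$, $x\in E$, $\epsilon,R>0$, two discrete subsets $A,B\subset E$ are $\epsilon$-close in the open ball of radius $R$ centered at $x$ if there exist subsets $A'\subset A$, $B'\subset B$ containing all points of $A$, respectively $B$, at distance at most $R$ from $x$, and a bijection $\psi:A'\to B'$ with $\mathrm{dist}(a,\psi(a))<\epsilon$ for all $a\in A'$. Here $E=\mathbb C$ with the Euclidean metric. *)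

theory Defs
  imports "HOL-Analysis.Analysis"
begin

definition phyllo :: "real \<Rightarrow> nat \<Rightarrow> complex" where
  "phyllo \<theta> n = complex_of_real (sqrt (real n)) * exp (2 * \<i> * complex_of_real pi * complex_of_real \<theta> * of_nat n)"

definition eps_close_in_ball :: "complex set \<Rightarrow> complex set \<Rightarrow> complex \<Rightarrow> real \<Rightarrow> real \<Rightarrow> bool" where
  "eps_close_in_ball A B x \<epsilon> R \<longleftrightarrow>
     (\<exists>A' B' \<psi>. A' \<subseteq> A \<and> B' \<subseteq> B \<and>
        {a \<in> A. dist a x \<le> R} \<subseteq> A' \<and> {b \<in> B. dist b x \<le> R} \<subseteq> B' \<and>
        bij_betw \<psi> A' B' \<and> (\<forall>a\<in>A'. dist a (\<psi> a) < \<epsilon>))"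

definition lattice_gen :: "complex \<Rightarrow> complex \<Rightarrow> complex set" where
  "lattice_gen \<omega>1 \<omega>2 = {of_int a * \<omega>1 + of_int b * \<omega>2 | a b. True}"

definition affine_lattice :: "complex set \<Rightarrow> bool" where
  "affine_lattice L \<longleftrightarrow>
     (\<exists>\<alpha> \<omega>1 \<omega>2. (\<forall>s t :: real. of_real s * \<omega>1 + of_real t * \<omega>2 = 0 \<longrightarrow> s = 0 \<and> t = 0) \<and>
        L = (\<lambda>z. \<alpha> + z) ` lattice_gen \<omega>1 \<omega>2)"

definition similar_sets :: "complex set \<Rightarrow> complex set \<Rightarrow> bool" where
  "similar_sets A B \<longleftrightarrow> (\<exists>c \<beta>. c \<noteq> 0 \<and> B = (\<lambda>z. c * z + \<beta>) ` A)"

end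

theory Submission
  imports Defs
begin




lemma taylor1: "cmod (cis a - 1 - \<i> * of_real a) \<le> a^2"
proof -
  have "norm(exp (\<i> * of_real a) - (\<Sum>k\<le>1. (\<i> * of_real a) ^ k / (fact k))) \<le> exp\<bar>Re (\<i> * of_real a)\<bar> * (norm (\<i> * of_real a)) ^ (Suc 1) / (fact 1)"
    by (rule Taylor_exp)
  then show ?thesis by (simp add: cis_conv_exp power2_eq_square diff_diff_eq norm_mult)
qed

lemma sin_lower1: fixes y :: real assumes "\<bar>y\<bar> \<le> 1" shows "\<bar>y\<bar> / 2 \<le> \<bar>sin y\<bar>"
proof -
  have "norm(exp (\<i> * of_real y) - (\<Sum>k\<le>2. (\<i> * of_real y) ^ k / (fact k))) \<le> exp\<bar>Re (\<i> * of_real y)\<bar> * (norm (\<i> * of_real y)) ^ (Suc 2) / (fact 2)"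
    by (rule Taylor_exp)
  moreover have "(\<Sum>k\<le>2. (\<i> * of_real y) ^ k / (fact k)) = 1 + \<i> * of_real y - of_real (y^2/2)"
    by (simp add: eval_nat_numeral power_mult_distrib)
  moreover have "exp\<bar>Re (\<i> * of_real y)\<bar> * (norm (\<i> * of_real y)) ^ (Suc 2) / (fact 2) = \<bar>y\<bar>^3/2"
    by (simp add: norm_mult)
  ultimately have h: "cmod (cis y - (1 + \<i> * of_real y - of_real (y^2/2))) \<le> \<bar>y\<bar>^3/2"
    by (simp add: cis_conv_exp)
  have "Im (cis y - (1 + \<i> * of_real y - of_real (y^2/2))) = sin y - y" by simp
  hence "\<bar>sin y - y\<bar> = \<bar>Im (cis y - (1 + \<i> * of_real y - of_real (y^2/2)))\<bar>" by simp
  also have "\<dots> \<le> \<bar>y\<bar>^3/2" using abs_Im_le_cmod h order_trans by blast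
  also have "\<dots> \<le> \<bar>y\<bar>/2"
  proof -
    have "\<bar>y\<bar> * \<bar>y\<bar> * \<bar>y\<bar> \<le> 1 * \<bar>y\<bar>" using assms by (intro mult_right_mono mult_le_one) auto
    thus ?thesis by (simp add: power3_eq_cube)
  qed
  finally show ?thesis by linarith
qed

lemma sin_lower: assumes "\<bar>y\<bar> \<le> pi/2" shows "\<bar>y\<bar> / pi \<le> \<bar>sin y\<bar>"
proof (cases "\<bar>y\<bar> \<le> 1")
  case True
  have "\<bar>y\<bar> / pi \<le> \<bar>y\<bar> / 2" using pi_gt3 by (intro divide_left_mono) auto
  then show ?thesis using sin_lower1[OF True] by linarith
next
  case False
  have "sin 1 \<ge> (1::real)/2" using sin_lower1[of 1] sin_gt_zero_02[of 1] by simp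
  moreover have "sin 1 \<le> sin \<bar>y\<bar>" using False assms
    by (intro sin_monotone_2pi_le) auto
  moreover have "\<bar>sin y\<bar> = sin \<bar>y\<bar>"
    using assms sin_ge_zero[of "\<bar>y\<bar>"] pi_gt_zero by (cases "y \<ge> 0") (auto simp: abs_if)
  moreover have "\<bar>y\<bar> / pi \<le> 1/2" using assms pi_gt_zero by (simp add: divide_simps)
  ultimately show ?thesis by linarith
qed

lemma cis_minus1: "cmod (cis (2 * y) - 1) = 2 * \<bar>sin y\<bar>"
proof -
  have "(cmod (cis (2 * y) - 1))^2 = (cos (2 * y) - 1)^2 + (sin (2 * y))^2"
    by (simp add: cmod_power2)
  also have "\<dots> = 2 - 2 * cos (2 * y)"
    by (simp add: power2_diff sin_squared_eq algebra_simps)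
  also have "\<dots> = (2 * \<bar>sin y\<bar>)^2"
    by (simp add: cos_double_sin power_mult_distrib)
  finally show ?thesis
    by (metis abs_of_nonneg norm_ge_zero power2_eq_iff_nonneg zero_le_mult_iff zero_le_numeral abs_ge_zero)
qed

lemma cis_lower: assumes "\<bar>d\<bar> \<le> 1/2" shows "2 * \<bar>d\<bar> \<le> cmod (cis (2 * pi * d) - 1)"
proof -
  have "\<bar>pi * d\<bar> \<le> pi/2" using assms pi_gt_zero by (simp add: abs_mult)
  hence "\<bar>pi * d\<bar> / pi \<le> \<bar>sin (pi * d)\<bar>" by (rule sin_lower)
  hence "\<bar>d\<bar> \<le> \<bar>sin (pi * d)\<bar>" using pi_gt_zero by (simp add: abs_mult)
  moreover have "cmod (cis (2 * pi * d) - 1) = 2 * \<bar>sin (pi * d)\<bar>"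
    using cis_minus1[of "pi * d"] by (simp add: mult.assoc)
  ultimately show ?thesis by simp
qed



lemma l1: fixes s X :: real assumes "s > 0" shows "2 * s * (X / s)^2 = 2 * X^2 / s"
  using assms by (simp add: power2_eq_square)
lemma l2: fixes s R :: real assumes "s > 0" shows "(2 * s) * (4 * pi * R/s)^2 = 32 * pi^2 * R^2 / s"
  using l1[OF assms, of "4 * pi * R"] by (simp add: power_mult_distrib)

lemma approx:
  fixes s t w a R :: real
  assumes s: "s > 0" and R: "R > 0" and t: "t \<ge> 0" and tk: "t^2 = s^2 + w"
    and w: "abs (w) \<le> 3 * R * s" and al: "abs (a) \<le> 4 * pi * R/s" and sR: "s \<ge> 3 * R"
  shows "cmod (of_real t * cis a - (of_real s + of_real (w/(2 * s)) + \<i> * of_real (a * s))) \<le> 600 * R^2/s"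
proof -
  have ts: "t + s > 0" using s t by simp
  have tms: "t - s = w / (t + s)"
    using tk ts by (simp add: field_simps power2_eq_square)
  have tms_b: "abs (t - s) \<le> 3 * R"
  proof -
    have "abs (t - s) = abs (w) / (t+s)" using tms ts by simp
    also have "\<dots> \<le> abs (w) / s" using ts s t by (intro divide_left_mono) auto
    also have "\<dots> \<le> 3 * R" using w s by (simp add: divide_simps)
    finally show ?thesis .
  qed
  have t2s: "t \<le> 2 * s" using tms_b sR by linarith
  have e1: "t - s - w/(2 * s) = - ((t - s)^2 / (2 * s))"
    using tk s by (simp add: field_simps power2_eq_square)
  have b1: "abs (t - s - w/(2 * s)) \<le> 9 * R^2/(2 * s)"
  proof -
    have "abs (t - s - w/(2 * s)) = (t - s)^2/(2 * s)" using e1 s by simp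
    also have "(t - s)^2 \<le> (3 * R)^2" using tms_b by (metis abs_ge_zero power2_abs power_mono)
    hence "(t - s)^2/(2 * s) \<le> (3 * R)^2/(2 * s)" using s by (simp add: divide_right_mono)
    finally show ?thesis by (simp add: power_mult_distrib)
  qed
  have alsq: "a^2 \<le> (4 * pi * R/s)^2" using al by (metis abs_ge_zero power2_abs power_mono)
  have b2: "cmod (of_real t * (cis a - 1 - \<i> * of_real a)) \<le> 512 * R^2/s"
  proof -
    have "cmod (of_real t * (cis a - 1 - \<i> * of_real a)) = t * cmod (cis a - 1 - \<i> * of_real a)"
      using t by (simp add: norm_mult)
    also have "\<dots> \<le> (2 * s) * (4 * pi * R/s)^2"
      by (rule mult_mono[OF t2s order_trans[OF taylor1 alsq]]) (use s in auto)
    also have "\<dots> = 32 * pi^2 * R^2 / s" using l2[OF s] .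
    also have "\<dots> \<le> 32 * 16 * R^2 / s"
    proof -
      have "pi^2 \<le> 4^2" by (rule power_mono) (use pi_less_4 pi_gt_zero in auto)
      hence "pi^2 \<le> 16" by simp
      thus ?thesis using s R by (simp add: divide_right_mono)
    qed
    finally show ?thesis by simp
  qed
  have b3: "cmod (\<i> * of_real a * of_real (t - s)) \<le> 48 * R^2/s"
  proof -
    have "cmod (\<i> * of_real a * of_real (t - s)) = abs (a) * abs (t - s)" by (simp add: norm_mult del: of_real_diff)
    also have "\<dots> \<le> (4 * pi * R/s) * (3 * R)" using al tms_b by (intro mult_mono) auto
    also have "\<dots> = 12 * pi * R^2/s" by (simp add: power2_eq_square)
    also have "\<dots> \<le> 48 * R^2/s" using pi_less_4 s R by (simp add: divide_right_mono)
    finally show ?thesis .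
  qed
  have eq: "of_real t * cis a - (of_real s + of_real (w/(2 * s)) + \<i> * of_real (a * s))
     = of_real (t - s - w/(2 * s)) + of_real t * (cis a - 1 - \<i> * of_real a) + \<i> * of_real a * of_real (t - s)"
    by (simp add: algebra_simps)
  have "cmod (of_real t * cis a - (of_real s + of_real (w/(2 * s)) + \<i> * of_real (a * s)))
    \<le> abs (t - s - w/(2 * s)) + cmod (of_real t * (cis a - 1 - \<i> * of_real a)) + cmod (\<i> * of_real a * of_real (t - s))"
    unfolding eq by (metis norm_of_real norm_triangle_le norm_triangle_ineq add_mono order_refl)
  also have "\<dots> \<le> 9 * R^2/(2 * s) + 512 * R^2/s + 48 * R^2/s" using b1 b2 b3 by linarith
  also have "\<dots> \<le> 600 * R^2/s" using s R by (simp add: field_simps)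
  finally show ?thesis .
qed


lemma lattice_part:
  fixes \<theta> s :: real and u :: complex
  assumes s: "s > 0" and u: "cmod u = 1"
  defines "c \<equiv> u * (of_real (1/(2 * s)) + \<i> * of_real (2 * pi * s * \<theta>))"
  defines "\<omega> \<equiv> 4 * \<i> * complex_of_real pi * of_real (s^2) / (1 + 4 * \<i> * complex_of_real pi * complex_of_real \<theta> * of_real (s^2))"
  shows "c * \<omega> = u * (\<i> * of_real (2 * pi * s))" and "c \<noteq> 0"
    and "\<And>a b. c * (of_real a + of_real b * \<omega>) = u * (of_real (a/(2 * s)) + \<i> * of_real (2 * pi * s * (\<theta> * a+b)))"
proof -
  define q where "q = 1 + 4 * \<i> * complex_of_real pi * complex_of_real \<theta> * of_real (s^2)"
  have q0: "q \<noteq> 0" unfolding q_def by (simp add: complex_eq_iff)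
  have cq: "c = u * q / (2 * of_real s)"
    unfolding c_def q_def using s by (simp add: field_simps power2_eq_square)
  show cw: "c * \<omega> = u * (\<i> * of_real (2 * pi * s))"
    unfolding cq \<omega>_def q_def[symmetric] using q0 s by (simp add: field_simps power2_eq_square)
  have "u \<noteq> 0" using u by auto
  then show "c \<noteq> 0" unfolding cq using q0 s by simp
  fix a b :: real
  have "c * (of_real a + of_real b * \<omega>) = of_real a * c + of_real b * (c * \<omega>)" by (simp add: algebra_simps)
  also have "\<dots> = u * (of_real (a/(2 * s)) + \<i> * of_real (2 * pi * s * (\<theta> * a+b)))"
    unfolding cw unfolding c_def by (simp add: algebra_simps)
  finally show "c * (of_real a + of_real b * \<omega>) = u * (of_real (a/(2 * s)) + \<i> * of_real (2 * pi * s * (\<theta> * a+b)))" .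
qed

lemma phyllo_shift:
  fixes \<theta> :: real and n :: nat and a b :: int
  assumes "int n + a \<ge> 0"
  shows "phyllo \<theta> (nat (int n + a)) = cis (2 * pi * \<theta> * n) * (of_real (sqrt (real n + a)) * cis (2 * pi * (\<theta> * a+b)))"
proof -
  have m: "real (nat (int n + a)) = real n + a" using assms by simp
  have "cis (2 * pi * \<theta> * (real n + a)) = cis (2 * pi * \<theta> * n) * cis (2 * pi * (\<theta> * a+b)) * cis (2 * pi * of_int(-b))"
    by (simp add: cis_mult algebra_simps)
  also have "cis (2 * pi * of_int(-b)) = 1"
    by (metis cis_multiple_2pi Ints_of_int mult.commute)
  finally have "cis (2 * pi * \<theta> * (real n + a)) = cis (2 * pi * \<theta> * n) * cis (2 * pi * (\<theta> * a+b))" by simp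
  moreover have "phyllo \<theta> (nat (int n + a)) = of_real (sqrt (real n + a)) * cis (2 * pi * \<theta> * (real n + a))"
    unfolding phyllo_def m[symmetric] by (simp add: cis_conv_exp mult_ac)
  ultimately show ?thesis by (simp add: mult_ac)
qed


lemma main:
  fixes \<epsilon> R \<theta> :: real and n :: nat
  assumes ep: "\<epsilon> > 0" and R: "R > 0" and th0: "0 \<le> \<theta>" and th1: "\<theta> < 1"
    and sb: "sqrt (real n) \<ge> 4 * R + 1" and se: "600 * R^2 / sqrt (real n) < \<epsilon>"
  shows "\<exists>L. affine_lattice L \<and>
              similar_sets L (lattice_gen 1 (4 * \<i> * complex_of_real pi * of_nat n /
                                             (1 + 4 * \<i> * complex_of_real pi * complex_of_real (frac \<theta>) * of_nat n))) \<and>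
              eps_close_in_ball (range (phyllo \<theta>)) L (phyllo \<theta> n) \<epsilon> R"
proof -
  define s where "s = sqrt (real n)"
  have s0: "s > 0" using sb R unfolding s_def by linarith
  have ssq: "real n = s^2" unfolding s_def by simp
  have sR: "s \<ge> 4 * R + 1" using sb s_def by simp
  define u where "u = cis (2 * pi * \<theta> * n)"
  have u1: "cmod u = 1" unfolding u_def by simp
  define x where "x = phyllo \<theta> n"
  define \<omega> where "\<omega> = 4 * \<i> * complex_of_real pi * of_real (s^2) / (1 + 4 * \<i> * complex_of_real pi * complex_of_real \<theta> * of_real (s^2))"
  define c where "c = u * (of_real (1/(2 * s)) + \<i> * of_real (2 * pi * s * \<theta>))"
  have om: "4 * \<i> * complex_of_real pi * of_nat n /
        (1 + 4 * \<i> * complex_of_real pi * complex_of_real (frac \<theta>) * of_nat n) = \<omega>"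
    unfolding \<omega>_def using th0 th1 by (simp add: frac_eq ssq[symmetric])
  note LP = lattice_part[OF s0 u1, of \<theta>, folded c_def \<omega>_def]
  have xsu: "x = u * of_real s"
    using phyllo_shift[of n 0 \<theta> 0] unfolding x_def u_def s_def by simp
  define P where "P a b = x + u * (of_real (a/(2 * s)) + \<i> * of_real (2 * pi * s * (\<theta> * a + b)))" for a b :: real
  define L where "L = (\<lambda>z. c * z + x) ` lattice_gen 1 \<omega>"
  have Lmem: "z \<in> L \<longleftrightarrow> (\<exists>(a::int) (b::int). z = P a b)" for z
  proof -
    have "z \<in> L \<longleftrightarrow> (\<exists>(a::int) (b::int). z = c * (of_real (of_int a) + of_real (of_int b) * \<omega>) + x)"
      unfolding L_def lattice_gen_def by auto
    also have "\<dots> \<longleftrightarrow> (\<exists>(a::int) (b::int). z = P a b)"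
      unfolding P_def LP(3) by (simp add: add.commute)
    finally show ?thesis .
  qed
  have simL: "similar_sets L (lattice_gen 1 \<omega>)"
  proof -
    have "(\<lambda>z. inverse c * z + (- x / c)) ` L = lattice_gen 1 \<omega>"
      unfolding L_def image_image using LP(2) by (simp add: field_simps)
    thus ?thesis unfolding similar_sets_def using LP(2) by (metis inverse_nonzero_iff_nonzero)
  qed
  have affL: "affine_lattice L"
  proof -
    have "L = (\<lambda>z. x + z) ` lattice_gen c (c * \<omega>)"
    proof (intro equalityI subsetI)
      fix z assume "z \<in> L"
      then obtain a b :: int where "z = P a b" using Lmem by blast
      hence "z = x + (of_int a * c + of_int b * (c * \<omega>))"
        using LP(3)[of "of_int a" "of_int b"] unfolding P_def by (simp add: algebra_simps)
      thus "z \<in> (\<lambda>z. x + z) ` lattice_gen c (c * \<omega>)" unfolding lattice_gen_def by blast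
    next
      fix z assume "z \<in> (\<lambda>z. x + z) ` lattice_gen c (c * \<omega>)"
      then obtain a b :: int where "z = x + (of_int a * c + of_int b * (c * \<omega>))"
        unfolding lattice_gen_def by blast
      hence "z = P a b" using LP(3)[of "of_int a" "of_int b"] unfolding P_def by (simp add: algebra_simps)
      thus "z \<in> L" using Lmem by blast
    qed
    moreover have "\<forall>p q :: real. of_real p * c + of_real q * (c * \<omega>) = 0 \<longrightarrow> p = 0 \<and> q = 0"
    proof (intro allI impI)
      fix p q :: real
      assume h: "of_real p * c + of_real q * (c * \<omega>) = 0"
      have "u * (of_real (p/(2 * s)) + \<i> * of_real (2 * pi * s * (\<theta> * p + q))) = 0"
        using h LP(3)[of p q] by (simp add: algebra_simps)
      hence "of_real (p/(2 * s)) + \<i> * of_real (2 * pi * s * (\<theta> * p + q)) = 0" using u1 by auto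
      hence "p/(2 * s) = 0" and "2 * pi * s * (\<theta> * p + q) = 0" by (simp_all add: complex_eq_iff)
      thus "p = 0 \<and> q = 0" using s0 by auto
    qed
    ultimately show ?thesis unfolding affine_lattice_def by blast
  qed
  define G where "G = {p :: int \<times> int. abs (real_of_int (fst p)) \<le> 3 * R * s \<and> abs (\<theta> * real_of_int (fst p) + real_of_int (snd p)) \<le> 2 * R / s}"
  define g where "g p = phyllo \<theta> (nat (int n + fst p))" for p :: "int \<times> int"
  define Q where "Q p = P (of_int (fst p)) (of_int (snd p))" for p :: "int \<times> int"
  have s3R: "3 * R * s \<le> real n"
  proof -
    have "s * (3 * R) \<le> s * s" using sR s0 R by (intro mult_left_mono) auto
    thus ?thesis unfolding ssq by (simp add: power2_eq_square mult_ac)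
  qed
  have nonneg: "int n + a \<ge> 0" if "abs (real_of_int a) \<le> 3 * R * s" for a :: int
  proof -
    have "real_of_int (int n + a) \<ge> 0" using that s3R by simp
    thus ?thesis by linarith
  qed
  have gform: "g (a,b) = u * (of_real (sqrt (real n + a)) * cis (2 * pi * (\<theta> * a + b)))"
    if "abs (real_of_int a) \<le> 3 * R * s" for a b :: int
    unfolding g_def u_def using phyllo_shift[OF nonneg[OF that], of \<theta> b] by simp
  have close: "dist (g (a,b)) (Q (a,b)) < \<epsilon>" if "(a,b) \<in> G" for a b
  proof -
    have ha: "abs (real_of_int a) \<le> 3 * R * s" and hd: "abs (\<theta> * a + b) \<le> 2 * R / s"
      using that unfolding G_def by auto
    define t where "t = sqrt (real n + a)"
    define al where "al = 2 * pi * (\<theta> * a + b)"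
    have rn: "real n + a \<ge> 0" using ha s3R by linarith
    have t0: "t \<ge> 0" unfolding t_def using rn by simp
    have tsq: "t^2 = s^2 + real_of_int a" unfolding t_def using rn ssq by simp
    have hal: "abs al \<le> 4 * pi * R / s"
    proof -
      have "abs al = 2 * pi * abs (\<theta> * a + b)" unfolding al_def by (simp add: abs_mult)
      also have "\<dots> \<le> 2 * pi * (2 * R / s)" using hd by (intro mult_left_mono) auto
      finally show ?thesis by simp
    qed
    have "g (a,b) - Q (a,b) = u * (of_real t * cis al - (of_real s + of_real (real_of_int a / (2 * s)) + \<i> * of_real (al * s)))"
      unfolding gform[OF ha] Q_def P_def xsu t_def al_def by (simp add: algebra_simps)
    hence "dist (g (a,b)) (Q (a,b)) = cmod (of_real t * cis al - (of_real s + of_real (real_of_int a / (2 * s)) + \<i> * of_real (al * s)))"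
      using u1 by (simp add: dist_norm norm_mult)
    also have "\<dots> \<le> 600 * R^2 / s"
      by (rule approx[OF s0 R t0 tsq ha hal]) (use sR R in linarith)
    also have "\<dots> < \<epsilon>" using se s_def by simp
    finally show ?thesis .
  qed
  have Acov: "z \<in> g ` G" if zr: "z \<in> range (phyllo \<theta>)" and zd: "dist z x \<le> R" for z
  proof -
    from zr obtain m where zm: "z = phyllo \<theta> m" by (rule rangeE)
    define a where "a = int m - int n"
    define b where "b = - floor (\<theta> * a + 1/2)"
    define d where "d = \<theta> * a + b"
    have fc: "of_int (floor (\<theta> * a + 1/2)) \<le> \<theta> * a + 1/2 \<and> \<theta> * a + 1/2 < of_int (floor (\<theta> * a + 1/2)) + 1"
      using floor_correct[of "\<theta> * a + 1/2"] by simp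
    have deq: "d = \<theta> * a + 1/2 - of_int (floor (\<theta> * a + 1/2)) - 1/2"
      unfolding d_def b_def by simp
    have d1: "abs d \<le> 1/2" unfolding abs_le_iff using fc deq by linarith
    have mn: "int n + a = int m" unfolding a_def by simp
    define T where "T = sqrt (real m)"
    have T0: "T \<ge> 0" unfolding T_def by simp
    have zform: "z = u * (of_real T * cis (2 * pi * d))"
      unfolding zm T_def d_def u_def using phyllo_shift[of n a \<theta> b] mn by simp
    have h1: "cmod (of_real T * cis (2 * pi * d) - of_real s) \<le> R"
    proof -
      have "z - x = u * (of_real T * cis (2 * pi * d) - of_real s)"
        unfolding zform xsu by (simp add: algebra_simps)
      thus ?thesis using zd u1 by (simp add: dist_norm norm_mult)
    qed
    have h2: "abs (T - s) \<le> R"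
      using norm_triangle_ineq3[of "of_real T * cis (2 * pi * d)" "of_real s"] h1 T0 s0
      by (simp add: norm_mult)
    have Tsq: "T^2 = real m" unfolding T_def by simp
    have ha: "abs (real_of_int a) \<le> 3 * R * s"
    proof -
      have "real_of_int a = T^2 - s^2" unfolding Tsq ssq[symmetric] a_def by simp
      also have "\<dots> = (T - s) * (T + s)" by (simp add: power2_eq_square algebra_simps)
      finally have "abs (real_of_int a) = abs (T - s) * (T + s)" using T0 s0 by (simp add: abs_mult)
      also have "\<dots> \<le> R * (T + s)" using h2 T0 s0 by (intro mult_right_mono) auto
      also have "\<dots> \<le> R * (2 * s + R)" using h2 R by (intro mult_left_mono) auto
      also have "\<dots> \<le> 3 * R * s" using R sR by (simp add: algebra_simps power2_eq_square mult_left_mono)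
      finally show ?thesis .
    qed
    have Ts: "T \<ge> s / 2" using h2 sR by linarith
    have h3: "T * cmod (cis (2 * pi * d) - 1) \<le> 2 * R"
    proof -
      have "of_real T * (cis (2 * pi * d) - 1) = (of_real T * cis (2 * pi * d) - of_real s) + of_real (s - T)"
        by (simp add: algebra_simps)
      hence "cmod (of_real T * (cis (2 * pi * d) - 1)) \<le> cmod (of_real T * cis (2 * pi * d) - of_real s) + abs (s - T)"
        by (metis norm_of_real norm_triangle_ineq)
      thus ?thesis using h1 h2 T0 by (simp add: norm_mult)
    qed
    have "2 * abs d \<le> cmod (cis (2 * pi * d) - 1)" by (rule cis_lower[OF d1])
    hence "T * (2 * abs d) \<le> 2 * R" using h3 T0 by (meson mult_left_mono order_trans)
    hence "(s / 2) * (2 * abs d) \<le> 2 * R" using Ts by (meson abs_ge_zero mult_right_mono order_trans zero_le_mult_iff zero_le_numeral)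
    hence hd: "abs d \<le> 2 * R / s" using s0 by (simp add: field_simps)
    have "(a, b) \<in> G" unfolding G_def using ha hd d_def by simp
    moreover have "z = g (a, b)" unfolding g_def zm using mn by simp
    ultimately show ?thesis by blast
  qed
  have Bcov: "z \<in> Q ` G" if zr: "z \<in> L" and zd: "dist z x \<le> R" for z
  proof -
    obtain a b :: int where zP: "z = P a b" using zr Lmem by blast
    define w where "w = of_real (real_of_int a / (2 * s)) + \<i> * of_real (2 * pi * s * (\<theta> * a + b))"
    have "z - x = u * w" unfolding zP P_def w_def by simp
    hence cw: "cmod w \<le> R" using zd u1 by (simp add: dist_norm norm_mult)
    have "abs (Re w) \<le> R" using cw abs_Re_le_cmod order_trans by blast
    hence "abs (real_of_int a) / (2 * s) \<le> R" unfolding w_def using s0 by (simp add: abs_div)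
    hence ha: "abs (real_of_int a) \<le> 3 * R * s" using s0 R by (simp add: field_simps)
    have "abs (Im w) \<le> R" using cw abs_Im_le_cmod order_trans by blast
    hence "2 * pi * s * abs (\<theta> * a + b) \<le> R" unfolding w_def using s0 by (simp add: abs_mult)
    hence "abs (\<theta> * a + b) \<le> R / (2 * pi * s)" using s0 pi_gt_zero by (simp add: field_simps)
    also have "\<dots> \<le> 2 * R / s" using s0 R pi_gt3 by (simp add: field_simps)
    finally have "(a, b) \<in> G" unfolding G_def using ha by simp
    moreover have "z = Q (a, b)" unfolding Q_def zP by simp
    ultimately show ?thesis by blast
  qed
  have injg: "inj_on g G"
  proof (rule inj_onI)
    fix p q assume p: "p \<in> G" and q: "q \<in> G" and e: "g p = g q"
    obtain a b where pab: "p = (a, b)" by fastforce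
    obtain a' b' where qab: "q = (a', b')" by fastforce
    have ha: "abs (real_of_int a) \<le> 3 * R * s" and hd: "abs (\<theta> * a + b) \<le> 2 * R / s"
      using p pab unfolding G_def by auto
    have ha': "abs (real_of_int a') \<le> 3 * R * s" and hd': "abs (\<theta> * a' + b') \<le> 2 * R / s"
      using q qab unfolding G_def by auto
    have r1: "real n + real_of_int a \<ge> 0" using ha s3R by linarith
    have r2: "real n + real_of_int a' \<ge> 0" using ha' s3R by linarith
    have "cmod (g p) = sqrt (real n + a)" unfolding pab gform[OF ha] using u1 r1 by (simp add: norm_mult)
    moreover have "cmod (g q) = sqrt (real n + a')" unfolding qab gform[OF ha'] using u1 r2 by (simp add: norm_mult)
    ultimately have "sqrt (real n + a) = sqrt (real n + a')" using e by metis
    hence "real n + real_of_int a = real n + real_of_int a'" using real_sqrt_eq_iff by blast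
    hence aa: "a = a'" by linarith
    have hd'': "abs (\<theta> * real_of_int a + real_of_int b') \<le> 2 * R / s" using hd' aa by simp
    have "2 * R / s < 1/2" using s0 sR R by (simp add: field_simps)
    hence "abs (real_of_int b - real_of_int b') < 1" using hd hd'' by linarith
    hence "b = b'" by linarith
    thus "p = q" using aa pab qab by simp
  qed
  have injQ: "inj_on Q G"
  proof (rule inj_onI)
    fix p q assume p: "p \<in> G" and q: "q \<in> G" and e: "Q p = Q q"
    obtain a b where pab: "p = (a, b)" by fastforce
    obtain a' b' where qab: "q = (a', b')" by fastforce
    have "u * (of_real (real_of_int a / (2 * s)) + \<i> * of_real (2 * pi * s * (\<theta> * a + b)))
        = u * (of_real (real_of_int a' / (2 * s)) + \<i> * of_real (2 * pi * s * (\<theta> * a' + b')))"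
      using e unfolding pab qab Q_def P_def by simp
    hence "of_real (real_of_int a / (2 * s)) + \<i> * of_real (2 * pi * s * (\<theta> * a + b))
        = of_real (real_of_int a' / (2 * s)) + \<i> * of_real (2 * pi * s * (\<theta> * a' + b'))"
      using u1 by auto
    hence "real_of_int a / (2 * s) = real_of_int a' / (2 * s)" and
      "2 * pi * s * (\<theta> * a + b) = 2 * pi * s * (\<theta> * a' + b')"
      by (simp_all add: complex_eq_iff)
    hence "a = a'" "b = b'" using s0 by auto
    thus "p = q" using pab qab by simp
  qed
  have ecl: "eps_close_in_ball (range (phyllo \<theta>)) L (phyllo \<theta> n) \<epsilon> R"
    unfolding eps_close_in_ball_def
  proof (intro exI conjI)
    show "g ` G \<subseteq> range (phyllo \<theta>)" unfolding g_def by auto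
    show "Q ` G \<subseteq> L" unfolding Q_def using Lmem by auto
    show "{a \<in> range (phyllo \<theta>). dist a (phyllo \<theta> n) \<le> R} \<subseteq> g ` G"
      using Acov unfolding x_def by blast
    show "{b \<in> L. dist b (phyllo \<theta> n) \<le> R} \<subseteq> Q ` G"
      using Bcov unfolding x_def by blast
    show "bij_betw (Q \<circ> inv_into G g) (g ` G) (Q ` G)"
      by (rule bij_betw_trans[OF bij_betw_inv_into[OF inj_on_imp_bij_betw[OF injg]] inj_on_imp_bij_betw[OF injQ]])
    show "\<forall>a\<in>g ` G. dist a ((Q \<circ> inv_into G g) a) < \<epsilon>"
    proof
      fix z assume "z \<in> g ` G"
      then obtain p where p: "p \<in> G" "z = g p" by blast
      obtain a b where pab: "p = (a, b)" by fastforce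
      have "(Q \<circ> inv_into G g) z = Q p" using p injg by simp
      thus "dist z ((Q \<circ> inv_into G g) z) < \<epsilon>" using close[of a b] p pab by simp
    qed
  qed
  show ?thesis
    unfolding om by (intro exI[of _ L] conjI affL simL ecl)
qed


theorem theorem1:
  fixes \<epsilon> R :: real
  assumes "\<epsilon> > 0" and "R > 0"
  shows "\<exists>N :: nat. \<forall>\<theta> :: real. \<forall>n :: nat. 0 \<le> \<theta> \<and> \<theta> < 1 \<and> n \<ge> N \<longrightarrow>
           (\<exists>L. affine_lattice L \<and>
              similar_sets L (lattice_gen 1 (4 * \<i> * complex_of_real pi * of_nat n /
                                             (1 + 4 * \<i> * complex_of_real pi * complex_of_real (frac \<theta>) * of_nat n))) \<and>
              eps_close_in_ball (range (phyllo \<theta>)) L (phyllo \<theta> n) \<epsilon> R)"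
proof -
  define K where "K = 4 * R + 2 + 600 * R^2 / \<epsilon>"
  have q0: "600 * R^2 / \<epsilon> \<ge> 0" using assms by simp
  show ?thesis
  proof (intro exI[of _ "nat (ceiling (K^2))"] allI impI)
    fix \<theta> :: real and n :: nat
    assume h: "0 \<le> \<theta> \<and> \<theta> < 1 \<and> n \<ge> nat (ceiling (K^2))"
    have "K^2 \<le> real (nat (ceiling (K^2)))" by (rule real_nat_ceiling_ge)
    also have "\<dots> \<le> real n" by (rule of_nat_mono) (use h in blast)
    finally have "K \<le> sqrt (real n)" by (rule real_le_rsqrt)
    hence sb: "sqrt (real n) \<ge> 4 * R + 1" and sg: "sqrt (real n) > 600 * R^2 / \<epsilon>"
      unfolding K_def using q0 assms by linarith+
    have sp: "sqrt (real n) > 0" using sb assms by linarith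
    have "600 * R^2 < sqrt (real n) * \<epsilon>" using sg assms(1) by (simp add: pos_divide_less_eq)
    hence se: "600 * R^2 / sqrt (real n) < \<epsilon>" using sp by (simp add: pos_divide_less_eq mult.commute)
    show "\<exists>L. affine_lattice L \<and>
              similar_sets L (lattice_gen 1 (4 * \<i> * complex_of_real pi * of_nat n /
                                             (1 + 4 * \<i> * complex_of_real pi * complex_of_real (frac \<theta>) * of_nat n))) \<and>
              eps_close_in_ball (range (phyllo \<theta>)) L (phyllo \<theta> n) \<epsilon> R"
      using h by (intro main[OF assms _ _ sb se]) auto
  qed
qed

end
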